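(* Let $r\ge3$. For any partition $\mathcal{Q}$ of $[r]=\{1,\dots,r\}$ with $|\mathcal{Q}|\ge2$ and any $\psi:2^{[r]}\to\mathbb{R}$ with $\psi(\emptyset)=1$, we have $\mathrm{cum}_{[r]}(\psi^{\mathcal{Q}})=0$.
   Context: $\mathfrak{P}_{[r]}$ is the set of cyclically ordered partitions of $[r]$ (partitions into non-empty blocks together with a cyclic order on the blocks), $|\mathcal{P}|$ the number of blocks. For $\phi:2^{[r]}\to\mathbb{R}$, $\mathrm{cum}_{[r]}(\phi)=\sum_{\mathcal{P}\in\mathfrak{P}_{[r]}}(-1)^{|\mathcal{P}|-1}\prod_{I\in\mathcal{P}}\phi(I)$. For a partition $\mathcal{Q}$ of $[r]$, $\psi^{\mathcal{Q}}(I)=\prod_{J\in\mathcal{Q}}\psi(I\cap J)$. *)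

theory Defs
  imports Complex_Main "HOL-Library.Disjoint_Sets" "HOL-Combinatorics.Permutations"
begin

text \<open>A cyclic order on a finite set B of blocks is represented by its successor map:
  a permutation of B consisting of a single cycle through all elements of B.\<close>
definition cyclic_order_on :: "'b set \<Rightarrow> ('b \<Rightarrow> 'b) \<Rightarrow> bool" where
  "cyclic_order_on B \<sigma> \<longleftrightarrow> \<sigma> permutes B \<and> (\<forall>x\<in>B. \<forall>y\<in>B. \<exists>n. (\<sigma> ^^ n) x = y)"

definition cyc_partitions :: "'a set \<Rightarrow> ('a set set \<times> ('a set \<Rightarrow> 'a set)) set" where
  "cyc_partitions A = {(P, \<sigma>). partition_on A P \<and> cyclic_order_on P \<sigma>}"

definition cum :: "'a set \<Rightarrow> ('a set \<Rightarrow> real) \<Rightarrow> real" where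
  "cum A \<phi> = (\<Sum>(P, \<sigma>)\<in>cyc_partitions A. (-1) ^ (card P - 1) * (\<Prod>I\<in>P. \<phi> I))"

definition psi_part :: "('a set \<Rightarrow> real) \<Rightarrow> 'a set set \<Rightarrow> 'a set \<Rightarrow> real" where
  "psi_part \<psi> Q I = (\<Prod>J\<in>Q. \<psi> (I \<inter> J))"

end

theory Submission
  imports Defs "HOL-Combinatorics.Cycles"
begin


fun ok :: "'a set \<Rightarrow> 'a set list \<Rightarrow> bool" where
  "ok C [] = (C = {})"
| "ok C (S # ys) = (S \<noteq> {} \<and> S \<subseteq> C \<and> ok (C - S) ys)"

lemma ok_sub: "ok C xs \<Longrightarrow> B \<in> set xs \<Longrightarrow> B \<subseteq> C \<and> B \<noteq> {}"
  by (induction xs arbitrary: C) auto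

lemma ok_union: "ok C xs \<Longrightarrow> \<Union>(set xs) = C"
  by (induction xs arbitrary: C) auto

lemma ok_imp: "ok C xs \<Longrightarrow> distinct xs \<and> partition_on C (set xs)"
proof (induction xs arbitrary: C)
  case Nil then show ?case by (simp add: partition_on_empty)
next
  case (Cons S ys)
  then have h: "S \<noteq> {}" "S \<subseteq> C" "ok (C - S) ys" by auto
  have dj: "disjnt S (\<Union>(set ys))" using ok_union[OF h(3)] by (auto simp: disjnt_def)
  have "S \<notin> set ys" using ok_sub[OF h(3)] h(1) by blast
  then show ?case using Cons.IH[OF h(3)] h partition_on_insert[OF dj] by auto
qed

lemma imp_ok: "distinct xs \<Longrightarrow> partition_on C (set xs) \<Longrightarrow> ok C xs"
proof (induction xs arbitrary: C)
  case Nil then show ?case by (simp add: partition_on_def)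
next
  case (Cons S ys)
  have dj: "disjnt S (\<Union>(set ys))"
    using Cons.prems by (auto simp: partition_on_def disjoint_def disjnt_def)
  then show ?case using Cons partition_on_insert[OF dj] by auto
qed

lemma ok_set_eq: "{xs. ok C xs} = (if C = {} then {[]} else
   (\<Union>S\<in>Pow C - {{}}. (Cons S) ` {ys. ok (C - S) ys}))"
proof (cases "C = {}")
  case True
  have "ok {} xs \<longleftrightarrow> xs = []" for xs :: "'a set list" by (cases xs) auto
  then show ?thesis using True by auto
next
  case False
  have h: "ok C xs \<longleftrightarrow> (\<exists>S ys. xs = S # ys \<and> S \<in> Pow C - {{}} \<and> ok (C - S) ys)" for xs
    using False by (cases xs) auto
  show ?thesis
  proof (rule set_eqI)
    fix xs
    show "xs \<in> {xs. ok C xs} \<longleftrightarrow> xs \<in> (if C = {} then {[]} else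
      (\<Union>S\<in>Pow C - {{}}. (Cons S) ` {ys. ok (C - S) ys}))"
      unfolding h using False by (simp only: if_False mem_Collect_eq UN_iff image_iff) blast
  qed
qed

lemma ok_finite: "finite C \<Longrightarrow> finite {xs. ok C xs}"
proof (induction C rule: finite_psubset_induct)
  case (psubset C)
  show ?case
  proof (cases "C = {}")
    case True then show ?thesis by (subst ok_set_eq) simp
  next
    case False
    have "finite {ys. ok (C - S) ys}" if "S \<in> Pow C - {{}}" for S
      using psubset that by blast
    then show ?thesis using False psubset(1) by (subst ok_set_eq) auto
  qed
qed

definition Lf :: "('a set \<Rightarrow> real) \<Rightarrow> 'a set \<Rightarrow> real" where
  "Lf \<phi> C = (\<Sum>xs\<in>{xs. ok C xs}. (-1) ^ length xs * prod_list (map \<phi> xs))"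

lemma Lf_empty: "Lf \<phi> {} = 1"
  unfolding Lf_def by (subst ok_set_eq) simp

lemma Lf_rec: assumes "finite C" "C \<noteq> {}"
  shows "Lf \<phi> C = - (\<Sum>S\<in>Pow C - {{}}. \<phi> S * Lf \<phi> (C - S))"
proof -
  have "Lf \<phi> C = (\<Sum>S\<in>Pow C - {{}}. \<Sum>xs\<in>(Cons S) ` {ys. ok (C - S) ys}.
      (-1) ^ length xs * prod_list (map \<phi> xs))"
    unfolding Lf_def using assms
    by (subst ok_set_eq, simp only: if_False, intro sum.UNION_disjoint)
       (auto intro: ok_finite)
  also have "\<dots> = (\<Sum>S\<in>Pow C - {{}}. - (\<phi> S * Lf \<phi> (C - S)))"
    unfolding Lf_def
    by (intro sum.cong refl, subst sum.reindex) (auto simp: sum_distrib_left sum_negf mult_ac)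
  finally show ?thesis by (simp add: sum_negf)
qed

lemma Lf_inv: assumes "finite C" "\<phi> {} = 1"
  shows "(\<Sum>S\<in>Pow C. \<phi> S * Lf \<phi> (C - S)) = (if C = {} then 1 else 0)"
proof (cases "C = {}")
  case True then show ?thesis using assms by (simp add: Lf_empty)
next
  case False
  have "(\<Sum>S\<in>Pow C. \<phi> S * Lf \<phi> (C - S)) = \<phi> {} * Lf \<phi> (C - {}) + (\<Sum>S\<in>Pow C - {{}}. \<phi> S * Lf \<phi> (C - S))"
    using assms by (subst sum.remove[of _ "{}"]) auto
  then show ?thesis using Lf_rec[OF assms(1) False, of \<phi>] assms False by simp
qed



lemma cyc_nth: assumes "distinct xs" "j < length xs"
  shows "(cycle_of_list xs ^^ n) (xs ! j) = xs ! ((n + j) mod length xs)"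
proof -
  have "map (cycle_of_list xs ^^ n) xs ! j = rotate n xs ! j"
    using cyclic_rotation[OF assms(1)] by simp
  then show ?thesis using assms by (simp add: nth_rotate add.commute)
qed

lemma cyc_order_list: assumes "distinct xs"
  shows "cyclic_order_on (set xs) (cycle_of_list xs)"
  unfolding cyclic_order_on_def
proof (intro conjI ballI)
  show "cycle_of_list xs permutes set xs" by (rule cycle_permutes)
  fix x y assume "x \<in> set xs" "y \<in> set xs"
  then obtain i j where ij: "i < length xs" "j < length xs" "x = xs ! i" "y = xs ! j"
    by (auto simp: in_set_conv_nth)
  have "(cycle_of_list xs ^^ (j + length xs - i)) x = xs ! ((j + length xs - i + i) mod length xs)"
    using cyc_nth[OF assms ij(1)] ij by simp
  also have "(j + length xs - i + i) mod length xs = j" using ij by simp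
  finally show "\<exists>n. (cycle_of_list xs ^^ n) x = y" using ij by blast
qed

lemma cum_lists: assumes "finite A" "a \<in> A"
  shows "cum A \<phi> = (\<Sum>xs\<in>{xs. ok A xs \<and> a \<in> hd xs}.
           (-1) ^ (length xs - 1) * prod_list (map \<phi> xs))"
proof -
  let ?h = "\<lambda>xs. (set xs, cycle_of_list xs)"
  let ?S = "{xs. ok A xs \<and> a \<in> hd xs}"
  have ne: "xs \<noteq> []" if "ok A xs" for xs using that assms by (cases xs) auto
  have bij: "bij_betw ?h ?S (cyc_partitions A)"
  proof (rule bij_betw_imageI)
    show "inj_on ?h ?S"
    proof (rule inj_onI)
      fix xs ys assume xs: "xs \<in> ?S" and ys: "ys \<in> ?S" and eq: "?h xs = ?h ys"
      have dx: "distinct xs" "partition_on A (set xs)" using ok_imp xs by auto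
      have dy: "distinct ys" using ok_imp ys by auto
      have nx: "xs \<noteq> []" "ys \<noteq> []" using ne xs ys by auto
      have se: "set xs = set ys" and ce: "cycle_of_list xs = cycle_of_list ys" using eq by auto
      have "hd xs \<in> set xs" by (rule hd_in_set[OF nx(1)])
      moreover have "hd ys \<in> set xs" unfolding se by (rule hd_in_set[OF nx(2)])
      moreover have "a \<in> hd xs" "a \<in> hd ys" using xs ys by auto
      moreover have "disjoint (set xs)" using dx(2) partition_onD2 by blast
      ultimately have hd: "hd xs = hd ys"
        by (meson disjnt_iff pairwiseD)
      have len: "length xs = length ys"
        using distinct_card[OF dx(1)] distinct_card[OF dy] se by simp
      show "xs = ys"
      proof (rule nth_equalityI[OF len])
        fix i assume i: "i < length xs"
        have "xs ! i = (cycle_of_list xs ^^ i) (xs ! 0)"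
          using cyc_nth[OF dx(1), of 0 i] nx i by simp
        moreover have "ys ! i = (cycle_of_list ys ^^ i) (ys ! 0)"
          using cyc_nth[OF dy, of 0 i] nx i len by simp
        ultimately show "xs ! i = ys ! i" using hd ce nx by (simp add: hd_conv_nth)
      qed
    qed
  next
    show "?h ` ?S = cyc_partitions A"
    proof (intro equalityI subsetI)
      fix p assume "p \<in> ?h ` ?S"
      then obtain xs where xs: "xs \<in> ?S" "p = ?h xs" by blast
      then show "p \<in> cyc_partitions A"
        using ok_imp[of A xs] cyc_order_list[of xs] unfolding cyc_partitions_def by auto
    next
      fix p assume p: "p \<in> cyc_partitions A"
      then obtain P \<sigma> where p': "p = (P, \<sigma>)" "partition_on A P" "cyclic_order_on P \<sigma>"
        unfolding cyc_partitions_def by auto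
      have fP: "finite P" using p'(2) assms(1)
        by (metis finite_UnionD partition_onD1)
      have perm: "\<sigma> permutes P" "\<forall>x\<in>P. \<forall>y\<in>P. \<exists>n. (\<sigma> ^^ n) x = y"
        using p'(3) unfolding cyclic_order_on_def by auto
      have pm: "permutation \<sigma>" using perm(1) fP permutation_permutes by blast
      obtain B1 where B1: "B1 \<in> P" "a \<in> B1" using p'(2) assms(2)
        unfolding partition_on_def by blast
      define xs where "xs = support \<sigma> B1"
      have dxs: "distinct xs" unfolding xs_def by (rule cycle_of_permutation[OF pm])
      have sxs: "set xs = P"
      proof
        show "set xs \<subseteq> P" unfolding xs_def support_set[OF pm]
          using permutes_in_image[OF permutes_funpow[OF perm(1)]] B1 by auto
        show "P \<subseteq> set xs" unfolding xs_def support_set[OF pm]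
          using perm(2) B1 by (metis rangeI subsetI)
      qed
      have lp: "least_power \<sigma> B1 > 0" using least_power_of_permutation(2)[OF pm] .
      have hxs: "hd xs = B1" unfolding xs_def using lp by (simp add: upt_conv_Cons)
      have cxs: "cycle_of_list xs = \<sigma>"
      proof
        fix b show "cycle_of_list xs b = \<sigma> b"
        proof (cases "b \<in> set xs")
          case True then show ?thesis unfolding xs_def using cycle_restrict[OF pm] by metis
        next
          case False then show ?thesis using id_outside_supp[OF False] sxs
              permutes_not_in[OF perm(1)] by metis
        qed
      qed
      have "ok A xs" using imp_ok[OF dxs] sxs p'(2) by simp
      then have "xs \<in> ?S" using hxs B1 by simp
      then show "p \<in> ?h ` ?S" using p'(1) sxs cxs by force
    qed
  qed
  have "cum A \<phi> = (\<Sum>xs\<in>?S. (\<lambda>(P, \<sigma>). (-1) ^ (card P - 1) * (\<Prod>I\<in>P. \<phi> I)) (?h xs))"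
    unfolding cum_def by (rule sum.reindex_bij_betw[OF bij, symmetric])
  also have "\<dots> = (\<Sum>xs\<in>?S. (-1) ^ (length xs - 1) * prod_list (map \<phi> xs))"
    by (intro sum.cong refl) (auto dest!: ok_imp simp: distinct_card prod.distinct_set_conv_list)
  finally show ?thesis .
qed



lemma pow_split: assumes "finite C"
  shows "(\<Sum>S\<in>Pow C. g S) = (\<Sum>T\<in>Pow (C \<inter> J). \<Sum>U\<in>Pow (C - J). g (T \<union> U))"
proof -
  have "(\<Sum>S\<in>Pow C. g S) = (\<Sum>p\<in>Pow (C \<inter> J) \<times> Pow (C - J). g (fst p \<union> snd p))"
    by (rule sum.reindex_bij_witness[where i = "\<lambda>p. fst p \<union> snd p" and j = "\<lambda>S. (S \<inter> J, S - J)"])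
       (auto simp: Int_Diff_Un)
  also have "\<dots> = (\<Sum>T\<in>Pow (C \<inter> J). \<Sum>U\<in>Pow (C - J). g (T \<union> U))"
    by (subst sum.cartesian_product) (simp add: case_prod_beta)
  finally show ?thesis .
qed

lemma prod_sum_pow:
  fixes f :: "'a set \<Rightarrow> 'a set \<Rightarrow> real"
  assumes "finite Q" "\<forall>J\<in>Q. \<forall>J'\<in>Q. J \<noteq> J' \<longrightarrow> J \<inter> J' = {}" "finite C" "C \<subseteq> \<Union>Q"
  shows "(\<Sum>S\<in>Pow C. \<Prod>J\<in>Q. f J (S \<inter> J)) = (\<Prod>J\<in>Q. \<Sum>T\<in>Pow (C \<inter> J). f J T)"
  using assms
proof (induction Q arbitrary: C rule: finite_induct)
  case empty
  then have "C = {}" by simp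
  then show ?case by simp
next
  case (insert J Q)
  have dj: "J \<inter> J' = {}" if "J' \<in> Q" for J'
  proof -
    have "J \<noteq> J'" using insert.hyps(2) that by blast
    then show ?thesis using insert.prems(1) that by simp
  qed
  have "(\<Sum>S\<in>Pow C. \<Prod>J\<in>insert J Q. f J (S \<inter> J))
      = (\<Sum>T\<in>Pow (C \<inter> J). \<Sum>U\<in>Pow (C - J). \<Prod>J\<in>insert J Q. f J ((T \<union> U) \<inter> J))"
    by (rule pow_split[OF insert.prems(2)])
  also have "\<dots> = (\<Sum>T\<in>Pow (C \<inter> J). \<Sum>U\<in>Pow (C - J). f J T * (\<Prod>J'\<in>Q. f J' (U \<inter> J')))"
  proof (intro sum.cong refl)
    fix T U assume T: "T \<in> Pow (C \<inter> J)" and U: "U \<in> Pow (C - J)"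
    have "(T \<union> U) \<inter> J = T" using T U by auto
    moreover have "(T \<union> U) \<inter> J' = U \<inter> J'" if "J' \<in> Q" for J' using T dj[OF that] by auto
    ultimately show "(\<Prod>J\<in>insert J Q. f J ((T \<union> U) \<inter> J)) = f J T * (\<Prod>J'\<in>Q. f J' (U \<inter> J'))"
      using insert.hyps by (simp add: prod.insert)
  qed
  also have "\<dots> = (\<Sum>T\<in>Pow (C \<inter> J). f J T) * (\<Sum>U\<in>Pow (C - J). \<Prod>J'\<in>Q. f J' (U \<inter> J'))"
    by (rule sum_product[of "f J" "Pow (C \<inter> J)" "\<lambda>U. \<Prod>J'\<in>Q. f J' (U \<inter> J')" "Pow (C - J)", symmetric])
  also have "(\<Sum>U\<in>Pow (C - J). \<Prod>J'\<in>Q. f J' (U \<inter> J')) = (\<Prod>J'\<in>Q. \<Sum>T\<in>Pow ((C - J) \<inter> J'). f J' T)"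
    using insert.IH[of "C - J"] insert.prems by auto
  also have "\<dots> = (\<Prod>J'\<in>Q. \<Sum>T\<in>Pow (C \<inter> J'). f J' T)"
  proof (intro prod.cong refl)
    fix J' assume "J' \<in> Q" then have "(C - J) \<inter> J' = C \<inter> J'" using dj by auto
    then show "(\<Sum>T\<in>Pow ((C - J) \<inter> J'). f J' T) = (\<Sum>T\<in>Pow (C \<inter> J'). f J' T)" by simp
  qed
  finally show ?case using insert.hyps by (simp add: prod.insert)
qed

lemma partition_disj: "partition_on A Q \<Longrightarrow> \<forall>J\<in>Q. \<forall>J'\<in>Q. J \<noteq> J' \<longrightarrow> J \<inter> J' = {}"
  unfolding partition_on_def disjoint_def by blast

lemma factor:
  assumes A: "finite A" "partition_on A Q" "\<psi> {} = 1"
  shows "finite C \<Longrightarrow> C \<subseteq> A \<Longrightarrow> Lf (psi_part \<psi> Q) C = (\<Prod>J\<in>Q. Lf \<psi> (C \<inter> J))"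
proof (induction C rule: finite_psubset_induct)
  case (psubset C)
  let ?\<phi> = "psi_part \<psi> Q"
  let ?X = "\<lambda>D. \<Prod>J\<in>Q. Lf \<psi> (D \<inter> J)"
  have fQ: "finite Q" using A by (metis finite_UnionD partition_onD1)
  have UQ: "\<Union>Q = A" using A partition_onD1 by blast
  have phi0: "?\<phi> {} = 1" using A(3) by (simp add: psi_part_def)
  have key: "(\<Sum>S\<in>Pow C. ?\<phi> S * ?X (C - S)) = (if C = {} then 1 else 0)"
  proof -
    have "(\<Sum>S\<in>Pow C. ?\<phi> S * ?X (C - S))
        = (\<Sum>S\<in>Pow C. \<Prod>J\<in>Q. (\<lambda>J T. \<psi> T * Lf \<psi> (C \<inter> J - T)) J (S \<inter> J))"
    proof (intro sum.cong refl)
      fix S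
      have "(C - S) \<inter> J = C \<inter> J - S \<inter> J" for J by auto
      then show "?\<phi> S * ?X (C - S) = (\<Prod>J\<in>Q. (\<lambda>J T. \<psi> T * Lf \<psi> (C \<inter> J - T)) J (S \<inter> J))"
        by (simp add: psi_part_def prod.distrib)
    qed
    also have "\<dots> = (\<Prod>J\<in>Q. \<Sum>T\<in>Pow (C \<inter> J). \<psi> T * Lf \<psi> (C \<inter> J - T))"
      by (rule prod_sum_pow[OF fQ partition_disj[OF A(2)] psubset(1)]) (use psubset UQ in auto)
    also have "\<dots> = (\<Prod>J\<in>Q. if C \<inter> J = {} then 1 else 0)"
    proof (intro prod.cong refl)
      fix J have "finite (C \<inter> J)" using psubset(1) by simp
      then show "(\<Sum>T\<in>Pow (C \<inter> J). \<psi> T * Lf \<psi> (C \<inter> J - T)) = (if C \<inter> J = {} then 1 else 0)"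
        by (rule Lf_inv[where \<phi>=\<psi>, OF _ A(3)])
    qed
    also have "\<dots> = (if C = {} then 1 else 0)"
    proof (cases "C = {}")
      case False
      then obtain x where "x \<in> C" by auto
      then obtain J where "J \<in> Q" "x \<in> J" using psubset(3) UQ by blast
      then show ?thesis using False fQ \<open>x \<in> C\<close>
        by (subst prod_zero) auto
    qed simp
    finally show ?thesis .
  qed
  show ?case
  proof (cases "C = {}")
    case True then show ?thesis by (simp add: Lf_empty)
  next
    case False
    have IH: "Lf ?\<phi> (C - S) = ?X (C - S)" if "S \<in> Pow C - {{}}" for S
      using psubset.IH[of "C - S"] that psubset(3) by auto
    have "Lf ?\<phi> C = - (\<Sum>S\<in>Pow C - {{}}. ?\<phi> S * ?X (C - S))"
      using Lf_rec[OF psubset(1) False] IH by simp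
    moreover have "(\<Sum>S\<in>Pow C. ?\<phi> S * ?X (C - S)) = ?\<phi> {} * ?X (C - {}) + (\<Sum>S\<in>Pow C - {{}}. ?\<phi> S * ?X (C - S))"
      using psubset(1) by (subst sum.remove[of _ "{}"]) auto
    ultimately show ?thesis using key False phi0 by simp
  qed
qed

lemma cum_split: assumes "finite A" "a \<in> A"
  shows "cum A \<phi> = (\<Sum>S\<in>Pow A. if a \<in> S then \<phi> S * Lf \<phi> (A - S) else 0)"
proof -
  have seteq: "{xs. ok A xs \<and> a \<in> hd xs} = (\<Union>S\<in>{S\<in>Pow A. a \<in> S}. (Cons S) ` {ys. ok (A - S) ys})"
  proof (rule set_eqI)
    fix xs
    show "xs \<in> {xs. ok A xs \<and> a \<in> hd xs} \<longleftrightarrow> xs \<in> (\<Union>S\<in>{S\<in>Pow A. a \<in> S}. (Cons S) ` {ys. ok (A - S) ys})"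
      using assms by (cases xs) auto
  qed
  have "cum A \<phi> = (\<Sum>S\<in>{S\<in>Pow A. a \<in> S}. \<Sum>xs\<in>(Cons S) ` {ys. ok (A - S) ys}.
           (-1) ^ (length xs - 1) * prod_list (map \<phi> xs))"
    unfolding cum_lists[OF assms] seteq using assms
    by (intro sum.UNION_disjoint) (auto intro: ok_finite)
  also have "\<dots> = (\<Sum>S\<in>{S\<in>Pow A. a \<in> S}. \<phi> S * Lf \<phi> (A - S))"
    unfolding Lf_def
    by (intro sum.cong refl, subst sum.reindex) (auto simp: sum_distrib_left mult_ac)
  also have "\<dots> = (\<Sum>S\<in>Pow A. if a \<in> S then \<phi> S * Lf \<phi> (A - S) else 0)"
    using assms by (subst sum.inter_filter[symmetric]) auto
  finally show ?thesis .
qed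



theorem proposition8p1:
  fixes r :: nat and Q :: "nat set set" and \<psi> :: "nat set \<Rightarrow> real"
  assumes "r \<ge> 3"
    and "partition_on {1..r} Q"
    and "card Q \<ge> 2"
    and "\<psi> {} = 1"
  shows "cum {1..r} (psi_part \<psi> Q) = 0"
proof -
  let ?A = "{1..r}"
  let ?\<phi> = "psi_part \<psi> Q"
  have fA: "finite ?A" by simp
  have a: "(1::nat) \<in> ?A" using assms(1) by simp
  have fQ: "finite Q" using fA assms(2) by (metis finite_UnionD partition_onD1)
  have UQ: "\<Union>Q = ?A" using assms(2) partition_onD1 by blast
  have ne: "{} \<notin> Q" using assms(2) partition_onD3 by blast
  obtain J0 where J0: "J0 \<in> Q" "1 \<in> J0" using a UQ by blast
  obtain J1 where J1: "J1 \<in> Q" "J1 \<noteq> J0"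
  proof -
    have "\<not> Q \<subseteq> {J0}"
    proof
      assume "Q \<subseteq> {J0}"
      then have "card Q \<le> card {J0}" by (intro card_mono) auto
      then show False using assms(3) by simp
    qed
    then show ?thesis using that by blast
  qed
  have JA: "J \<subseteq> ?A" if "J \<in> Q" for J using UQ that by blast
  define f where "f J T = (if J = J0 \<and> 1 \<notin> T then 0 else \<psi> T) * Lf \<psi> (J - T)" for J T
  have "cum ?A ?\<phi> = (\<Sum>S\<in>Pow ?A. if 1 \<in> S then ?\<phi> S * Lf ?\<phi> (?A - S) else 0)"
    by (rule cum_split[OF fA a])
  also have "\<dots> = (\<Sum>S\<in>Pow ?A. \<Prod>J\<in>Q. f J (S \<inter> J))"
  proof (intro sum.cong refl)
    fix S assume S: "S \<in> Pow ?A"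
    show "(if 1 \<in> S then ?\<phi> S * Lf ?\<phi> (?A - S) else 0) = (\<Prod>J\<in>Q. f J (S \<inter> J))"
    proof (cases "1 \<in> S")
      case True
      have L: "Lf ?\<phi> (?A - S) = (\<Prod>J\<in>Q. Lf \<psi> ((?A - S) \<inter> J))"
        by (rule factor[where \<psi>=\<psi>, OF fA assms(2) assms(4)]) auto
      have "f J (S \<inter> J) = \<psi> (S \<inter> J) * Lf \<psi> ((?A - S) \<inter> J)" if "J \<in> Q" for J
      proof -
        have "(?A - S) \<inter> J = J - S \<inter> J" using JA[OF that] by blast
        then show ?thesis unfolding f_def using True J0 by auto
      qed
      then have "(\<Prod>J\<in>Q. f J (S \<inter> J)) = (\<Prod>J\<in>Q. \<psi> (S \<inter> J)) * (\<Prod>J\<in>Q. Lf \<psi> ((?A - S) \<inter> J))"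
        by (simp add: prod.distrib)
      then show ?thesis using True L by (simp add: psi_part_def)
    next
      case False
      have "f J0 (S \<inter> J0) = 0" unfolding f_def using False by simp
      then have "(\<Prod>J\<in>Q. f J (S \<inter> J)) = 0" using fQ J0(1) by (intro prod_zero) auto
      then show ?thesis using False by simp
    qed
  qed
  also have "\<dots> = (\<Prod>J\<in>Q. \<Sum>T\<in>Pow (?A \<inter> J). f J T)"
    by (rule prod_sum_pow[OF fQ partition_disj[OF assms(2)] fA]) (use UQ in simp)
  also have "\<dots> = 0"
  proof (rule prod_zero[OF fQ], rule bexI[OF _ J1(1)])
    have fJ1: "finite J1" using JA[OF J1(1)] finite_subset fA by blast
    have "?A \<inter> J1 = J1" using JA[OF J1(1)] by blast
    then have "(\<Sum>T\<in>Pow (?A \<inter> J1). f J1 T) = (\<Sum>T\<in>Pow J1. \<psi> T * Lf \<psi> (J1 - T))"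
      unfolding f_def using J1(2) by simp
    also have "\<dots> = 0" using Lf_inv[where \<phi>=\<psi>, OF fJ1 assms(4)] J1(1) ne by auto
    finally show "(\<Sum>T\<in>Pow (?A \<inter> J1). f J1 T) = 0" .
  qed
  finally show ?thesis .
qed


end
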